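(* Let $\Delta x>0$ and define $g_\tau(x)=\dfrac{\tfrac12 x}{\sinh(\tfrac12 x)}$ for $x\neq0$, $g_\tau(0)=1$. Then the function $h(x)=g_\tau(\Delta x)\,e^x$ is the reconstruction pair of $\exp$, i.e. $e^x=\frac{1}{\Delta x}\int_{x-\frac12\Delta x}^{x+\frac12\Delta x}h(\zeta)\,d\zeta$ for all real $x$. Moreover $g_\tau$ is the generating function of the numbers $\tau_n$: setting $\tau_n:=\frac{1}{n!}g_\tau^{(n)}(0)$ for all $n\in\mathbb{N}_0$, one has $\tau_{2n+1}=0$ for all $n\in\mathbb{N}_0$, $\tau_0=1$, and $\tau_{2k}=\sum_{s=0}^{k-1}\frac{-\tau_{2s}}{2^{2k-2s}(2k-2s+1)!}$ for all $k>0$. *)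

theory Defs
  imports "HOL-Analysis.Analysis"
begin

definition g_tau :: "real \<Rightarrow> real" where
  "g_tau x = (if x = 0 then 1 else (x / 2) / sinh (x / 2))"

definition tau :: "nat \<Rightarrow> real" where
  "tau n = (deriv ^^ n) g_tau 0 / fact n"

end

theory Submission
  imports Defs
begin

lemma fps_exp_higher_deriv:
  fixes f :: "real \<Rightarrow> real"
  assumes "f has_fps_expansion F"
  shows "fps_nth F n = (deriv ^^ n) f 0 / fact n"
proof -
  have "(deriv ^^ n) f has_fps_expansion (fps_deriv ^^ n) F"
    using assms by (induction n) (auto intro: has_fps_expansion_deriv)
  hence "eventually (\<lambda>z. eval_fps ((fps_deriv ^^ n) F) z = (deriv ^^ n) f z) (nhds 0)"
    by (auto simp: has_fps_expansion_def)
  hence "eval_fps ((fps_deriv ^^ n) F) 0 = (deriv ^^ n) f 0"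
    by (rule eventually_nhds_x_imp_x)
  hence "(deriv ^^ n) f 0 = fact n * fps_nth F n"
    by (simp add: eval_fps_at_0 fps_0th_higher_deriv)
  thus ?thesis by simp
qed

definition FS :: "real fps" where
  "FS = (fps_exp (1/2) - fps_exp (-1/2)) * fps_const (1/2)"
definition PP :: "real fps" where
  "PP = fps_shift 1 FS * fps_const 2"

lemma FS_exp: "(\<lambda>x::real. (exp (1/2 * x) - exp (-1/2 * x)) * (1/2)) has_fps_expansion FS"
  unfolding FS_def by (intro fps_expansion_intros)

lemma FS_nth0: "fps_nth FS 0 = 0" by (simp add: FS_def)
lemma FS_nth1: "fps_nth FS 1 = 1/2" by (simp add: FS_def)
lemma FS_nth1': "fps_nth FS (Suc 0) = 1/2" by (simp add: FS_def)

lemma FS_subdeg: "1 \<le> subdegree FS"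
proof -
  have "FS \<noteq> 0" using FS_nth1 by auto
  hence "subdegree FS \<noteq> 0" using FS_nth0 subdegree_eq_0_iff by blast
  thus ?thesis by simp
qed

lemma PP_nth: "fps_nth PP n = (if even n then 1 / (2 ^ n * fact (n+1)) else 0)"
proof -
  have nz: "fact n * 2 + fact n * (real n * 2) \<noteq> (0::real)"
    by (metis add_pos_nonneg fact_gt_zero mult_pos_pos mult_nonneg_nonneg of_nat_0_le_iff zero_less_numeral less_imp_le order_less_irrefl)
  have "fps_nth PP n = ((1/2)^(n+1) - (-1/2)^(n+1)) / fact (n+1)"
    by (simp add: PP_def FS_def diff_divide_distrib del: power_Suc)
       (simp add: divide_simps del: power_Suc; simp add: algebra_simps nz del: power_Suc)
  also have "\<dots> = (if even n then 1 / (2 ^ n * fact (n+1)) else 0)"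
  proof (cases "even n")
    case True
    hence "(-1/2::real)^(n+1) = - ((1/2)^(n+1))" by (simp add: power_minus')
    thus ?thesis using True by (simp add: field_simps)
  next
    case False
    hence "(-1/2::real)^(n+1) = (1/2)^(n+1)" by (simp add: power_minus')
    thus ?thesis using False by simp
  qed
  finally show ?thesis .
qed

lemma PP_exp: "(\<lambda>x::real. (if x = 0 then 1/2 else ((exp (1/2 * x) - exp (-1/2 * x)) * (1/2)) / x ^ 1) * 2)
   has_fps_expansion PP"
  unfolding PP_def
  by (intro has_fps_expansion_cmult_right has_fps_expansion_shift[OF FS_exp FS_subdeg]) (simp add: FS_nth1')

lemma g_tau_eq: "g_tau = (\<lambda>x. inverse ((if x = 0 then 1/2 else ((exp (1/2 * x) - exp (-1/2 * x)) * (1/2)) / x ^ 1) * 2))"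
proof
  fix x :: real
  show "g_tau x = inverse ((if x = 0 then 1/2 else ((exp (1/2 * x) - exp (-1/2 * x)) * (1/2)) / x ^ 1) * 2)"
    by (auto simp: g_tau_def sinh_def field_simps)
qed

lemma g_tau_exp: "g_tau has_fps_expansion inverse PP"
  unfolding g_tau_eq by (intro has_fps_expansion_inverse PP_exp) (simp add: PP_nth)

lemma tau_eq: "tau n = fps_nth (inverse PP) n"
  using fps_exp_higher_deriv[OF g_tau_exp, of n] by (simp add: tau_def)

lemma rec: "m > 0 \<Longrightarrow> fps_nth (inverse PP) m = - (\<Sum>i<m. fps_nth (inverse PP) i * fps_nth PP (m - i))"
proof -
  assume m: "m > 0"
  have "inverse PP * PP = 1" by (rule inverse_mult_eq_1) (simp add: PP_nth)
  hence "fps_nth (inverse PP * PP) m = 0" using m by simp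
  hence "(\<Sum>i=0..m. fps_nth (inverse PP) i * fps_nth PP (m - i)) = 0" by (simp add: fps_mult_nth)
  moreover have "{0..m} = insert m {..<m}" by auto
  ultimately have "fps_nth (inverse PP) m * fps_nth PP 0 + (\<Sum>i<m. fps_nth (inverse PP) i * fps_nth PP (m - i)) = 0"
    by simp
  thus ?thesis by (simp add: PP_nth)
qed

lemma odd_zero: "odd m \<Longrightarrow> fps_nth (inverse PP) m = 0"
proof (induction m rule: less_induct)
  case (less m)
  have "m > 0" using less.prems by (cases m) auto
  have "(\<Sum>i<m. fps_nth (inverse PP) i * fps_nth PP (m - i)) = 0"
  proof (rule sum.neutral, safe)
    fix i assume "i < m"
    show "fps_nth (inverse PP) i * fps_nth PP (m - i) = 0"
    proof (cases "even i")
      case True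
      hence "odd (m - i)" using less.prems \<open>i < m\<close> by auto
      thus ?thesis by (simp add: PP_nth)
    next
      case False
      thus ?thesis using less.IH \<open>i < m\<close> by simp
    qed
  qed
  thus ?case using rec[OF \<open>m > 0\<close>] by simp
qed

theorem theorem1:
  fixes dx :: real
  assumes "dx > 0"
  shows "(\<forall>x::real. exp x = (1 / dx) * integral {x - dx / 2 .. x + dx / 2} (\<lambda>\<zeta>. g_tau dx * exp \<zeta>))
    \<and> (\<forall>n. tau (2 * n + 1) = 0)
    \<and> tau 0 = 1
    \<and> (\<forall>k>0. tau (2 * k) =
          (\<Sum>s<k. - tau (2 * s) / (2 ^ (2 * k - 2 * s) * fact (2 * k - 2 * s + 1))))"
proof (intro conjI allI impI)
  fix x :: real
  have le: "x - dx/2 \<le> x + dx/2" using assms by simp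
  have "integral {x - dx / 2 .. x + dx / 2} (\<lambda>\<zeta>. g_tau dx * exp \<zeta>)
      = g_tau dx * (exp (x + dx/2) - exp (x - dx/2))"
    using integral_exp[of "x - dx/2" "x + dx/2"] le by simp
  also have "exp (x + dx/2) - exp (x - dx/2) = exp x * (2 * sinh (dx/2))"
  proof -
    have "exp (x + dx/2) = exp x * exp (dx/2)" by (simp add: exp_add)
    moreover have "exp (x - dx/2) = exp x * exp (-(dx/2))" by (simp add: exp_add[symmetric])
    ultimately show ?thesis by (simp add: sinh_def algebra_simps)
  qed
  also have "g_tau dx * (exp x * (2 * sinh (dx/2))) = dx * exp x"
    using assms by (simp add: g_tau_def field_simps)
  finally show "exp x = (1 / dx) * integral {x - dx / 2 .. x + dx / 2} (\<lambda>\<zeta>. g_tau dx * exp \<zeta>)"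
    using assms by simp
next
  fix n show "tau (2 * n + 1) = 0" by (simp add: tau_eq odd_zero)
next
  show "tau 0 = 1" by (simp add: tau_eq PP_nth)
next
  fix k :: nat assume k: "k > 0"
  have "tau (2 * k) = - (\<Sum>i<2 * k. fps_nth (inverse PP) i * fps_nth PP (2 * k - i))"
    using rec[of "2 * k"] k by (simp add: tau_eq)
  also have "(\<Sum>i<2 * k. fps_nth (inverse PP) i * fps_nth PP (2 * k - i))
     = (\<Sum>i<2 * k. if even i then fps_nth (inverse PP) i * fps_nth PP (2 * k - i) else 0)"
    by (rule sum.cong) (auto simp: odd_zero)
  also have "\<dots> = (\<Sum>s<k. fps_nth (inverse PP) (2 * s) * fps_nth PP (2 * k - 2 * s))"
    by (subst sum_split_even_odd) simp
  also have "\<dots> = (\<Sum>s<k. tau (2 * s) / (2 ^ (2 * k - 2 * s) * fact (2 * k - 2 * s + 1)))"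
    by (rule sum.cong) (auto simp: tau_eq PP_nth)
  finally show "tau (2 * k) =
          (\<Sum>s<k. - tau (2 * s) / (2 ^ (2 * k - 2 * s) * fact (2 * k - 2 * s + 1)))"
    by (simp add: sum_negf)
qed

end
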